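(* Let $f$ be a $2\pi$-periodic continuous function with modulus of continuity $\omega(t)$. Let $\{p_k\}_{k\ge0}$ be non-negative numbers with $P_n:=\sum_{k=0}^n p_k\ne0$ for all $n$, and define $a_{n,k}=p_{n-k}/P_n$ for $0\le k\le n$ and $a_{n,k}=0$ otherwise. Let $\beta\ge0$ and suppose \[ \sum_{k=m}^{\infty}(k+1)^{\beta}\left|\frac{a_{n,k}}{(k+1)^{\beta}}-\frac{a_{n,k+1}}{(k+2)^{\beta}}\right|=\mathcal{O}(a_{n,m}) \] for all $m=0,1,\dots,n$ and $n=0,1,\dots$. Suppose there is a function $H(u)\ge0$ such that $\int_u^{\pi} t^{-2}\omega(t)\,dt=\mathcal{O}(H(u))$ as $u\to+0$ and $\int_0^{t}H(u)\,du=\mathcal{O}(tH(t))$ as $t\to+0$. Then, with \[ N_n(f;x):=\frac{1}{P_n}\sum_{k=0}^n p_{n-k}S_k(f;x), \] we have \[ \|N_n(f)-f\|=\mathcal{O}\left(\frac{p_n}{P_n}H\left(\frac{p_n}{P_n}\right)\right). \]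
   Context: $S_k(f;x)$ is the $k$-th partial sum of the Fourier series of $f$ at $x$. $\|\cdot\|$ is the sup-norm. $\omega(\delta)=\sup_{|h|\le\delta}\sup_x|f(x+h)-f(x)|$. The notation $u=\mathcal{O}(v)$ means $u\le Cv$ for a positive constant $C$ (independent of $n$). *)

theory Defs
  imports "HOL-Analysis.Analysis"
begin

definition fourier_a :: "(real \<Rightarrow> real) \<Rightarrow> nat \<Rightarrow> real" where
  "fourier_a f j = (1 / pi) * integral {-pi..pi} (\<lambda>t. f t * cos (real j * t))"

definition fourier_b :: "(real \<Rightarrow> real) \<Rightarrow> nat \<Rightarrow> real" where
  "fourier_b f j = (1 / pi) * integral {-pi..pi} (\<lambda>t. f t * sin (real j * t))"

definition fourier_partial_sum :: "nat \<Rightarrow> (real \<Rightarrow> real) \<Rightarrow> real \<Rightarrow> real" where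
  "fourier_partial_sum k f x =
     fourier_a f 0 / 2 +
     (\<Sum>j=1..k. fourier_a f j * cos (real j * x) + fourier_b f j * sin (real j * x))"

definition sup_norm :: "(real \<Rightarrow> real) \<Rightarrow> real" where
  "sup_norm g = (SUP x. \<bar>g x\<bar>)"

definition modulus_of_continuity :: "(real \<Rightarrow> real) \<Rightarrow> real \<Rightarrow> real" where
  "modulus_of_continuity f \<delta> =
     (SUP h\<in>{-\<delta>..\<delta>}. SUP x. \<bar>f (x + h) - f x\<bar>)"

definition norlund_mean :: "(nat \<Rightarrow> real) \<Rightarrow> nat \<Rightarrow> (real \<Rightarrow> real) \<Rightarrow> real \<Rightarrow> real" where
  "norlund_mean p n f x =
     (1 / (\<Sum>k\<le>n. p k)) * (\<Sum>k\<le>n. p (n - k) * fourier_partial_sum k f x)"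

end

theory Submission
  imports Defs
begin


lemma abel_sum:
  fixes b y :: "nat \<Rightarrow> real"
  shows "(\<Sum>j<N. b j * y j) = b N * (\<Sum>j<N. y j) - (\<Sum>j<N. (b (Suc j) - b j) * (\<Sum>i<Suc j. y i))"
  by (induction N) (simp_all add: algebra_simps)

lemma abel_mono_bound:
  fixes w x :: "nat \<Rightarrow> real"
  assumes w0: "\<And>i. i \<le> N \<Longrightarrow> 0 \<le> w i" and wm: "\<And>i. i < N \<Longrightarrow> w i \<le> w (Suc i)"
    and xb: "\<And>i. i \<le> N \<Longrightarrow> \<bar>\<Sum>j<i. x j\<bar> \<le> M"
  shows "\<bar>\<Sum>i<N. w i * x i\<bar> \<le> 2 * w N * M"
proof -
  have M0: "0 \<le> M" using xb[of 0] by simp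
  have "\<bar>\<Sum>i<N. w i * x i\<bar> \<le> \<bar>w N * (\<Sum>j<N. x j)\<bar> + \<bar>\<Sum>j<N. (w (Suc j) - w j) * (\<Sum>i<Suc j. x i)\<bar>"
    by (subst abel_sum) (rule abs_triangle_ineq4)
  also have "\<bar>w N * (\<Sum>j<N. x j)\<bar> \<le> w N * M" using w0[of N] xb[of N] by (simp add: abs_mult mult_left_mono)
  also have "\<bar>\<Sum>j<N. (w (Suc j) - w j) * (\<Sum>i<Suc j. x i)\<bar> \<le> (\<Sum>j<N. (w (Suc j) - w j) * M)"
  proof (rule order_trans[OF sum_abs], rule sum_mono)
    fix j assume "j \<in> {..<N}"
    then have "0 \<le> w (Suc j) - w j" "\<bar>\<Sum>i<Suc j. x i\<bar> \<le> M" using wm xb[of "Suc j"] by auto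
    then show "\<bar>(w (Suc j) - w j) * (\<Sum>i<Suc j. x i)\<bar> \<le> (w (Suc j) - w j) * M"
      by (simp add: abs_mult mult_left_mono)
  qed
  also have "(\<Sum>j<N. (w (Suc j) - w j) * M) = (w N - w 0) * M"
    by (simp add: sum_distrib_right[symmetric] sum_lessThan_telescope)
  finally have "\<bar>\<Sum>i<N. w i * x i\<bar> \<le> w N * M + (w N - w 0) * M" by simp
  moreover have "0 \<le> w 0 * M" using w0[of 0] M0 by simp
  ultimately show ?thesis by (simp add: algebra_simps)
qed

lemma sin_tele: "2 * sin (t/2) * sin ((real k + 1/2) * t) = cos (real k * t) - cos ((real k + 1) * t)"
proof -
  have a: "real k * t = (real k + 1/2) * t - t/2" by (simp add: algebra_simps)
  have b: "(real k + 1) * t = (real k + 1/2) * t + t/2" by (simp add: algebra_simps)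
  show ?thesis unfolding a b cos_diff cos_add by (simp add: algebra_simps)
qed

lemma cos_tele: "2 * sin (t/2) * cos (real j * t) = sin ((real j + 1/2) * t) - sin ((real j - 1/2) * t)"
proof -
  have a: "(real j + 1/2) * t = real j * t + t/2" by (simp add: algebra_simps)
  have b: "(real j - 1/2) * t = real j * t - t/2" by (simp add: algebra_simps)
  show ?thesis unfolding a b sin_diff sin_add by (simp add: algebra_simps)
qed

lemma sin_partial:
  "2 * sin (t/2) * (\<Sum>j<l. sin ((real (m+j) + 1/2) * t)) = cos (real m * t) - cos (real (m+l) * t)"
proof (induction l)
  case 0 then show ?case by simp
next
  case (Suc l)
  have "2 * sin (t/2) * (\<Sum>j<Suc l. sin ((real (m+j) + 1/2) * t))
      = 2 * sin (t/2) * (\<Sum>j<l. sin ((real (m+j) + 1/2) * t)) + 2 * sin (t/2) * sin ((real (m+l) + 1/2) * t)"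
    by (simp add: algebra_simps)
  also have "\<dots> = cos (real m * t) - cos (real (m + Suc l) * t)"
    unfolding Suc.IH sin_tele by (simp add: algebra_simps)
  finally show ?case .
qed

definition dker :: "nat \<Rightarrow> real \<Rightarrow> real" where
  "dker k t = 1/2 + (\<Sum>j=1..k. cos (real j * t))"

lemma dirichlet: "2 * sin (t/2) * dker k t = sin ((real k + 1/2) * t)"
proof (induction k)
  case 0 then show ?case by (simp add: dker_def)
next
  case (Suc k)
  have "dker (Suc k) t = dker k t + cos (real (Suc k) * t)" by (simp add: dker_def)
  then have "2 * sin (t/2) * dker (Suc k) t = 2 * sin (t/2) * dker k t + 2 * sin (t/2) * cos (real (Suc k) * t)"
    by (simp add: algebra_simps)
  also have "\<dots> = sin ((real (Suc k) + 1/2) * t)" unfolding Suc.IH cos_tele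
    by (simp add: algebra_simps)
  finally show ?case .
qed

lemma dker_bound: "\<bar>dker k t\<bar> \<le> real k + 1"
proof -
  have "\<bar>\<Sum>j=1..k. cos (real j * t)\<bar> \<le> (\<Sum>j=1..k. 1)"
    by (rule order_trans[OF sum_abs], rule sum_mono) simp
  then show ?thesis unfolding dker_def by simp
qed

lemma dker_even: "dker k (-t) = dker k t"
  by (simp add: dker_def)

lemma sin_half_ge: assumes "0 \<le> t" "t \<le> pi" shows "t/6 \<le> sin (t/2)"
proof -
  have "\<bar>sin (t/2) - (\<Sum>m<3. sin_coeff m * (t/2) ^ m)\<bar> \<le> inverse (fact 3) * \<bar>t/2\<bar> ^ 3"
    by (rule Maclaurin_sin_bound)
  moreover have "(\<Sum>m<3. sin_coeff m * (t/2) ^ m) = t/2"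
    by (simp add: numeral_3_eq_3 sin_coeff_def)
  ultimately have "t/2 - (t/2)^3/6 \<le> sin (t/2)" using assms by (simp add: fact_numeral abs_if split: if_splits)
  moreover have "(t/2)^3 \<le> 4 * (t/2)"
  proof -
    have "t/2 \<le> 2" using assms pi_less_4 by simp
    then have "(t/2)^2 \<le> 2^2" using assms by (intro power_mono) auto
    then have "(t/2)^2 * (t/2) \<le> 4 * (t/2)" using assms by (intro mult_right_mono) auto
    then show ?thesis by (simp add: power3_eq_cube power2_eq_square)
  qed
  ultimately show ?thesis by simp
qed

lemma cos_nat_periodic: "cos (y + real j * (2 * pi)) = cos y"
proof (induction j)
  case (Suc j)
  have "y + real (Suc j) * (2 * pi) = (y + real j * (2 * pi)) + 2 * pi" by (simp add: algebra_simps)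
  then show ?case using Suc by (metis cos_periodic)
qed simp



definition wt :: "real \<Rightarrow> nat \<Rightarrow> real" where
  "wt \<beta> j = (real j + 1) powr \<beta>"

definition Tm :: "real \<Rightarrow> (nat \<Rightarrow> real) \<Rightarrow> nat \<Rightarrow> real" where
  "Tm \<beta> A j = wt \<beta> j * \<bar>A j / wt \<beta> j - A (Suc j) / wt \<beta> (Suc j)\<bar>"

lemma wt_pos: "0 < wt \<beta> j" by (simp add: wt_def)

lemma wt_ne: "wt \<beta> j \<noteq> 0" using wt_pos[of \<beta> j] by simp

lemma wt_mono: "0 \<le> \<beta> \<Longrightarrow> i \<le> j \<Longrightarrow> wt \<beta> i \<le> wt \<beta> j"
  unfolding wt_def by (rule powr_mono2) auto

lemma wt_Suc: "0 \<le> \<beta> \<Longrightarrow> wt \<beta> (Suc j) \<le> 2 powr \<beta> * wt \<beta> j"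
proof -
  assume b: "0 \<le> \<beta>"
  have "wt \<beta> (Suc j) \<le> (2 * (real j + 1)) powr \<beta>" unfolding wt_def by (rule powr_mono2) (use b in auto)
  also have "\<dots> = 2 powr \<beta> * wt \<beta> j" unfolding wt_def by (subst powr_mult[symmetric]) auto
  finally show ?thesis .
qed

lemma Tm_nonneg: "0 \<le> Tm \<beta> A j" unfolding Tm_def using wt_pos[of \<beta> j] by simp

lemma sum_shift_conv: "m \<le> Suc n \<Longrightarrow> (\<Sum>l=m..n. g l) = (\<Sum>k<Suc n - m. g (m+k))"
proof (cases "m \<le> n")
  case True
  then have "(\<Sum>l=m..n. g l) = sum (g \<circ> (+) m) {0..n - m}" by (rule sum.atLeastAtMost_shift_0)
  also have "{0..n - m} = {..<Suc n - m}" using True by auto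
  finally show ?thesis by simp
next
  case False
  assume "m \<le> Suc n" then have "m = Suc n" using False by simp
  then show ?thesis by simp
qed

lemma tail_bound:
  fixes A :: "nat \<Rightarrow> real"
  assumes t: "0 < t" "t \<le> pi" and mn: "m \<le> n" and An: "A (Suc n) = 0" and b0: "0 \<le> \<beta>"
  shows "\<bar>\<Sum>k=m..n. A k * sin ((real k + 1/2) * t)\<bar>
          \<le> 2 * 2 powr \<beta> / sin (t/2) * (\<Sum>l=m..n. Tm \<beta> A l)"
proof -
  define N where "N = Suc n - m"
  define s0 where "s0 = sin (t/2)"
  have s0: "0 < s0" unfolding s0_def using t by (intro sin_gt_zero) auto
  define b where "b k = A (m+k) / wt \<beta> (m+k)" for k
  define y where "y k = wt \<beta> (m+k) * sin ((real (m+k) + 1/2) * t)" for k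
  have "(\<Sum>k=m..n. A k * sin ((real k + 1/2) * t)) = (\<Sum>k<N. A (m+k) * sin ((real (m+k) + 1/2) * t))"
    unfolding N_def using mn by (intro sum_shift_conv) simp
  also have "\<dots> = (\<Sum>k<N. b k * y k)"
  proof (rule sum.cong)
    fix k
    have "wt \<beta> (m+k) \<noteq> 0" by (rule wt_ne)
    then show "A (m+k) * sin ((real (m+k) + 1/2) * t) = b k * y k" unfolding b_def y_def by simp
  qed simp
  finally have e1: "(\<Sum>k=m..n. A k * sin ((real k + 1/2) * t)) = (\<Sum>k<N. b k * y k)" .
  have bN: "b N = 0" unfolding b_def N_def using mn An by (simp add: Suc_diff_le)
  have Yb: "\<bar>\<Sum>i<Suc k. y i\<bar> \<le> 2 * 2 powr \<beta> * wt \<beta> (m+k) / s0" for k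
  proof -
    have h1: "\<bar>\<Sum>i<Suc k. wt \<beta> (m+i) * sin ((real (m+i) + 1/2) * t)\<bar> \<le> 2 * wt \<beta> (m + Suc k) * (1/s0)"
    proof (rule abel_mono_bound)
      fix i
      show "0 \<le> wt \<beta> (m+i)" using wt_pos[of \<beta>] less_imp_le by blast
      show "wt \<beta> (m+i) \<le> wt \<beta> (m + Suc i)" using b0 by (intro wt_mono) auto
      have "2 * s0 * (\<Sum>j<i. sin ((real (m+j) + 1/2) * t)) = cos (real m * t) - cos (real (m+i) * t)"
        unfolding s0_def by (rule sin_partial)
      moreover have "\<bar>cos (real m * t) - cos (real (m+i) * t)\<bar> \<le> 2"
        using abs_cos_le_one[of "real m * t"] abs_cos_le_one[of "real (m+i) * t"] by linarith
      ultimately have "\<bar>2 * s0\<bar> * \<bar>\<Sum>j<i. sin ((real (m+j) + 1/2) * t)\<bar> \<le> 2"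
        by (simp only: abs_mult[symmetric])
      then have "s0 * \<bar>\<Sum>j<i. sin ((real (m+j) + 1/2) * t)\<bar> \<le> 1" using s0 by simp
      then show "\<bar>\<Sum>j<i. sin ((real (m+j) + 1/2) * t)\<bar> \<le> 1/s0" using s0
        by (simp add: le_divide_eq mult.commute)
    qed
    have "wt \<beta> (m + Suc k) \<le> 2 powr \<beta> * wt \<beta> (m+k)" using wt_Suc[OF b0, of "m+k"] by simp
    then have h2: "2 * wt \<beta> (m + Suc k) * (1/s0) \<le> 2 * (2 powr \<beta> * wt \<beta> (m+k)) * (1/s0)"
      using s0 by (intro mult_right_mono) auto
    have "\<bar>\<Sum>i<Suc k. y i\<bar> \<le> 2 * (2 powr \<beta> * wt \<beta> (m+k)) * (1/s0)"
      unfolding y_def using order_trans[OF h1 h2] .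
    then show ?thesis by simp
  qed
  have "\<bar>\<Sum>k<N. b k * y k\<bar> = \<bar>\<Sum>k<N. (b (Suc k) - b k) * (\<Sum>i<Suc k. y i)\<bar>"
    by (subst abel_sum) (simp add: bN)
  also have "\<dots> \<le> (\<Sum>k<N. \<bar>b (Suc k) - b k\<bar> * (2 * 2 powr \<beta> * wt \<beta> (m+k) / s0))"
  proof (rule order_trans[OF sum_abs], rule sum_mono)
    fix k
    show "\<bar>(b (Suc k) - b k) * (\<Sum>i<Suc k. y i)\<bar> \<le> \<bar>b (Suc k) - b k\<bar> * (2 * 2 powr \<beta> * wt \<beta> (m+k) / s0)"
      unfolding abs_mult by (rule mult_left_mono[OF Yb]) simp
  qed
  also have "\<dots> = 2 * 2 powr \<beta> / s0 * (\<Sum>k<N. Tm \<beta> A (m+k))"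
    unfolding sum_distrib_left
  proof (rule sum.cong)
    fix k
    have "Tm \<beta> A (m+k) = wt \<beta> (m+k) * \<bar>b (Suc k) - b k\<bar>"
      unfolding Tm_def b_def by (metis abs_minus_commute add_Suc_right)
    then show "\<bar>b (Suc k) - b k\<bar> * (2 * 2 powr \<beta> * wt \<beta> (m+k) / s0) = 2 * 2 powr \<beta> / s0 * Tm \<beta> A (m+k)"
      by simp
  qed simp
  also have "(\<Sum>k<N. Tm \<beta> A (m+k)) = (\<Sum>l=m..n. Tm \<beta> A l)"
    unfolding N_def using mn by (subst sum_shift_conv) auto
  finally show ?thesis using e1 unfolding s0_def by simp
qed



lemma kernel_facts:
  fixes A :: "nat \<Rightarrow> real"
  assumes A0: "\<And>k. 0 \<le> A k" and Az: "\<And>k. n < k \<Longrightarrow> A k = 0" and As: "(\<Sum>k\<le>n. A k) = 1"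
    and b0: "0 \<le> \<beta>" and Cc: "0 < Cc"
    and condA: "\<And>m. m \<le> n \<Longrightarrow> (\<Sum>l=m..n. Tm \<beta> A l) \<le> Cc * A m"
  shows kf_mono: "\<And>i j. i \<le> j \<Longrightarrow> j \<le> n \<Longrightarrow> A j \<le> Cc * A i"
    and kf_decay: "\<And>m. m \<le> n \<Longrightarrow> real (m+1) * A m \<le> Cc"
proof -
  have step: "A j \<le> (\<Sum>l=j..n. Tm \<beta> A l)" if "j \<le> n" for j
  proof -
    define b where "b l = A l / wt \<beta> l" for l
    have bn: "b (Suc n) = 0" unfolding b_def using Az by simp
    have "(\<Sum>l=j..n. b (Suc l) - b l) = b (Suc n) - b j" using that by (intro sum_Suc_diff) simp
    then have bj: "b j = (\<Sum>l=j..n. b l - b (Suc l))" using bn by (simp add: sum_subtractf)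
    have "A j = wt \<beta> j * b j" unfolding b_def using wt_ne[of \<beta> j] by simp
    also have "\<dots> \<le> wt \<beta> j * (\<Sum>l=j..n. \<bar>b l - b (Suc l)\<bar>)"
      unfolding bj using wt_pos[of \<beta> j] by (intro mult_left_mono) (auto intro: order_trans[OF _ sum_abs])
    also have "\<dots> \<le> (\<Sum>l=j..n. Tm \<beta> A l)"
      unfolding sum_distrib_left Tm_def b_def
      by (rule sum_mono) (intro mult_right_mono wt_mono b0, auto)
    finally show ?thesis .
  qed
  show mono: "A j \<le> Cc * A i" if "i \<le> j" "j \<le> n" for i j
  proof -
    have "A j \<le> (\<Sum>l=j..n. Tm \<beta> A l)" using step that by simp
    also have "\<dots> \<le> (\<Sum>l=i..n. Tm \<beta> A l)" using that
      by (intro sum_mono2) (auto simp: Tm_nonneg)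
    also have "\<dots> \<le> Cc * A i" using condA that by simp
    finally show ?thesis .
  qed
  show "real (m+1) * A m \<le> Cc" if "m \<le> n" for m
  proof -
    have "real (m+1) * A m = (\<Sum>i\<le>m. A m)" by simp
    also have "\<dots> \<le> (\<Sum>i\<le>m. Cc * A i)" using that by (intro sum_mono mono) auto
    also have "\<dots> = Cc * (\<Sum>i\<le>m. A i)" by (simp add: sum_distrib_left)
    also have "(\<Sum>i\<le>m. A i) \<le> (\<Sum>i\<le>n. A i)" using that A0 by (intro sum_mono2) auto
    then have "Cc * (\<Sum>i\<le>m. A i) \<le> Cc" using As Cc by simp
    finally show ?thesis .
  qed
qed

lemma nat_ceiling_lt: "0 < (x::real) \<Longrightarrow> real (nat \<lceil>x\<rceil>) < x + 1"
  by linarith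

lemma nat_ceiling_ge: "0 < (x::real) \<Longrightarrow> x \<le> real (nat \<lceil>x\<rceil>)"
  by linarith

lemma dker_sum_bound:
  assumes "\<And>k. 0 \<le> A k"
  shows "\<bar>\<Sum>k\<in>S. A k * dker k t\<bar> \<le> (\<Sum>k\<in>S. A k * (real k + 1))"
  by (rule order_trans[OF sum_abs], rule sum_mono)
     (simp add: abs_mult assms abs_of_nonneg mult_left_mono dker_bound)

lemma kernel_bounds:
  fixes A :: "nat \<Rightarrow> real"
  assumes A0: "\<And>k. 0 \<le> A k" and Az: "\<And>k. n < k \<Longrightarrow> A k = 0" and As: "(\<Sum>k\<le>n. A k) = 1"
    and b0: "0 \<le> \<beta>" and Cc: "0 < Cc"
    and condA: "\<And>m. m \<le> n \<Longrightarrow> (\<Sum>l=m..n. Tm \<beta> A l) \<le> Cc * A m"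
    and t: "0 < t" "t \<le> pi"
  shows kb1: "\<bar>\<Sum>k\<le>n. A k * dker k t\<bar> \<le> (5 + 36 * 2 powr \<beta> * Cc * (1 + Cc)) * A 0 / t^2"
    and kb2: "\<bar>\<Sum>k\<le>n. A k * dker k t\<bar> \<le> (5 + 36 * 2 powr \<beta> * Cc * (1 + Cc)) / t"
proof -
  define C1 where "C1 = 5 + 36 * 2 powr \<beta> * Cc * (1 + Cc)"
  define s0 where "s0 = sin (t/2)"
  have s0: "0 < s0" unfolding s0_def using t by (intro sin_gt_zero) auto
  have s0t: "t/6 \<le> s0" unfolding s0_def using t by (intro sin_half_ge) auto
  have pb: "0 < 2 powr \<beta>" by simp
  have tail: "\<bar>\<Sum>k=m..n. A k * dker k t\<bar> \<le> 36 * 2 powr \<beta> * Cc * A m / t^2" if mn: "m \<le> n" for m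
  proof -
    have dk: "dker k t = sin ((real k + 1/2) * t) / (2 * s0)" for k
      using dirichlet[of t k] s0 unfolding s0_def by (simp add: field_simps)
    have eq: "(\<Sum>k=m..n. A k * dker k t) = (\<Sum>k=m..n. A k * sin ((real k + 1/2) * t)) / (2 * s0)"
      unfolding dk sum_divide_distrib by simp
    have tb: "\<bar>\<Sum>k=m..n. A k * sin ((real k + 1/2) * t)\<bar> \<le> 2 * 2 powr \<beta> / s0 * (Cc * A m)"
    proof -
      have "\<bar>\<Sum>k=m..n. A k * sin ((real k + 1/2) * t)\<bar> \<le> 2 * 2 powr \<beta> / s0 * (\<Sum>l=m..n. Tm \<beta> A l)"
        unfolding s0_def using t mn Az b0 by (intro tail_bound) auto
      also have "\<dots> \<le> 2 * 2 powr \<beta> / s0 * (Cc * A m)"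
        using condA[OF mn] s0 pb by (intro mult_left_mono) auto
      finally show ?thesis .
    qed
    define X where "X = 2 powr \<beta> * Cc * A m"
    have X0: "0 \<le> X" unfolding X_def using A0[of m] Cc pb by simp
    have "\<bar>\<Sum>k=m..n. A k * dker k t\<bar> = \<bar>\<Sum>k=m..n. A k * sin ((real k + 1/2) * t)\<bar> / (2 * s0)"
      unfolding eq using s0 by simp
    also have "\<dots> \<le> (2 * 2 powr \<beta> / s0 * (Cc * A m)) / (2 * s0)"
      by (rule divide_right_mono[OF tb]) (use s0 in simp)
    also have "\<dots> = X / s0^2" unfolding X_def using s0 by (simp add: field_simps power2_eq_square)
    also have "\<dots> \<le> X / (t^2/36)"
    proof (rule divide_left_mono[OF _ X0])
      have "(t/6)^2 \<le> s0^2" using s0t t by (intro power_mono) auto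
      then show "t^2/36 \<le> s0^2" by (simp add: power_divide)
      show "0 < s0\<^sup>2 * (t\<^sup>2 / 36)" using s0 t by simp
    qed
    also have "\<dots> = 36 * 2 powr \<beta> * Cc * A m / t^2" unfolding X_def by simp
    finally show ?thesis .
  qed
  have C1ge: "36 * 2 powr \<beta> * Cc \<le> C1" unfolding C1_def using pb Cc by (simp add: algebra_simps)
  show "\<bar>\<Sum>k\<le>n. A k * dker k t\<bar> \<le> (5 + 36 * 2 powr \<beta> * Cc * (1 + Cc)) * A 0 / t^2"
  proof -
    have "\<bar>\<Sum>k\<le>n. A k * dker k t\<bar> \<le> 36 * 2 powr \<beta> * Cc * A 0 / t^2"
      using tail[of 0] by (simp add: atLeast0AtMost)
    also have "\<dots> \<le> C1 * A 0 / t^2" using C1ge A0[of 0] t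
      by (intro divide_right_mono mult_right_mono) auto
    finally show ?thesis unfolding C1_def .
  qed
  define m where "m = nat \<lceil>1/t\<rceil>"
  have m1: "1/t \<le> real m" unfolding m_def using t by (intro nat_ceiling_ge) simp
  have "real m < 1/t + 1" unfolding m_def using t by (intro nat_ceiling_lt) simp
  moreover have "1 \<le> 4/t" using t pi_less_4 by (simp add: field_simps)
  ultimately have m2: "real m \<le> 5/t" by simp
  have mpos: "0 < m" using m1 t by (metis divide_pos_pos gr0I less_numeral_extra(1) not_less of_nat_0)
  show "\<bar>\<Sum>k\<le>n. A k * dker k t\<bar> \<le> (5 + 36 * 2 powr \<beta> * Cc * (1 + Cc)) / t"
  proof (cases "n < m")
    case True
    have "\<bar>\<Sum>k\<le>n. A k * dker k t\<bar> \<le> (\<Sum>k\<le>n. A k * (real k + 1))" by (rule dker_sum_bound[OF A0])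
    also have "\<dots> \<le> (\<Sum>k\<le>n. A k * real m)"
      using True A0 by (intro sum_mono mult_left_mono) auto
    also have "\<dots> = real m" using As by (simp add: sum_distrib_right[symmetric])
    also have "\<dots> \<le> 5/t" by (rule m2)
    also have "\<dots> \<le> C1/t" unfolding C1_def using pb Cc t by (intro divide_right_mono) auto
    finally show ?thesis unfolding C1_def .
  next
    case False
    then have mn: "m \<le> n" by simp
    have split: "{..n} = {..<m} \<union> {m..n}" using mn by auto
    have "(\<Sum>k\<le>n. A k * dker k t) = (\<Sum>k<m. A k * dker k t) + (\<Sum>k=m..n. A k * dker k t)"
      unfolding split by (rule sum.union_disjoint) auto
    then have "\<bar>\<Sum>k\<le>n. A k * dker k t\<bar> \<le> \<bar>\<Sum>k<m. A k * dker k t\<bar> + \<bar>\<Sum>k=m..n. A k * dker k t\<bar>"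
      by simp
    moreover have "\<bar>\<Sum>k<m. A k * dker k t\<bar> \<le> 5/t"
    proof -
      have "\<bar>\<Sum>k<m. A k * dker k t\<bar> \<le> (\<Sum>k<m. A k * (real k + 1))" by (rule dker_sum_bound[OF A0])
      also have "\<dots> \<le> (\<Sum>k<m. A k * real m)"
        using A0 by (intro sum_mono mult_left_mono) auto
      also have "\<dots> = (\<Sum>k<m. A k) * real m" by (simp add: sum_distrib_right)
      also have "(\<Sum>k<m. A k) \<le> (\<Sum>k\<le>n. A k)" using mn A0 by (intro sum_mono2) auto
      then have "(\<Sum>k<m. A k) * real m \<le> real m" using As
        by (metis mult_left_le_one_le of_nat_0_le_iff mult.commute sum_nonneg A0)
      finally show ?thesis using m2 by simp
    qed
    moreover have "\<bar>\<Sum>k=m..n. A k * dker k t\<bar> \<le> 36 * 2 powr \<beta> * Cc * Cc / t"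
    proof -
      have dec: "real (m+1) * A m \<le> Cc"
        using kf_decay[OF A0 Az As b0 Cc condA mn] .
      have "A m * (1/t) \<le> A m * real (m+1)" using m1 A0[of m] by (intro mult_left_mono) auto
      then have "A m / t \<le> Cc" using dec by (simp add: mult.commute)
      then have Am: "A m \<le> Cc * t" using t by (simp add: divide_le_eq)
      have "\<bar>\<Sum>k=m..n. A k * dker k t\<bar> \<le> 36 * 2 powr \<beta> * Cc * A m / t^2" by (rule tail[OF mn])
      also have "\<dots> \<le> 36 * 2 powr \<beta> * Cc * (Cc * t) / t^2"
        using Am pb Cc t by (intro divide_right_mono mult_left_mono) auto
      also have "\<dots> = 36 * 2 powr \<beta> * Cc * Cc / t" using t by (simp add: power2_eq_square)
      finally show ?thesis .
    qed
    ultimately have "\<bar>\<Sum>k\<le>n. A k * dker k t\<bar> \<le> 5/t + 36 * 2 powr \<beta> * Cc * Cc / t" by linarith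
    also have "\<dots> \<le> C1 / t" unfolding C1_def using t pb Cc
      by (simp add: add_divide_distrib[symmetric] divide_right_mono algebra_simps)
    finally show ?thesis unfolding C1_def .
  qed
qed



lemma periodic_nat:
  fixes g :: "real \<Rightarrow> 'a"
  assumes gp: "\<And>x. g (x + 2*pi) = g x"
  shows "g (x + real n * (2*pi)) = g x"
proof (induction n)
  case (Suc n)
  have e: "x + real (Suc n) * (2*pi) = (x + real n * (2*pi)) + 2*pi" by (simp add: algebra_simps)
  have "g (x + real (Suc n) * (2*pi)) = g ((x + real n * (2*pi)) + 2*pi)" by (simp only: e)
  also have "\<dots> = g (x + real n * (2*pi))" by (rule gp)
  finally show ?case using Suc by simp
qed simp

lemma periodic_int:
  fixes g :: "real \<Rightarrow> 'a"
  assumes gp: "\<And>x. g (x + 2*pi) = g x"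
  shows "g (x + real_of_int k * (2*pi)) = g x"
proof (cases "0 \<le> k")
  case True
  define n where "n = nat k"
  have kn: "k = int n" unfolding n_def using True by simp
  have "real_of_int k = real n" unfolding kn by simp
  then show ?thesis using periodic_nat[where g=g, OF gp, of x n] by simp
next
  case False
  define n where "n = nat (-k)"
  have kn: "k = - int n" unfolding n_def using False by simp
  then have k: "real_of_int k = - real n" by simp
  have "g (x + real_of_int k * (2*pi)) = g ((x + real_of_int k * (2*pi)) + real n * (2*pi))"
    by (rule periodic_nat[where g=g, OF gp, symmetric])
  also have "(x + real_of_int k * (2*pi)) + real n * (2*pi) = x" unfolding k by (simp add: algebra_simps)
  finally show ?thesis .
qed

lemma frac_range:
  shows "0 \<le> x - real_of_int \<lfloor>x/(2*pi)\<rfloor> * (2*pi)" and "x - real_of_int \<lfloor>x/(2*pi)\<rfloor> * (2*pi) < 2*pi"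
proof -
  have p: "0 < 2*pi" by simp
  have "real_of_int \<lfloor>x/(2*pi)\<rfloor> \<le> x/(2*pi)" by (rule of_int_floor_le)
  then have "real_of_int \<lfloor>x/(2*pi)\<rfloor> * (2*pi) \<le> x/(2*pi) * (2*pi)" using p by (intro mult_right_mono) auto
  then show "0 \<le> x - real_of_int \<lfloor>x/(2*pi)\<rfloor> * (2*pi)" by simp
  have "x/(2*pi) < real_of_int \<lfloor>x/(2*pi)\<rfloor> + 1" by (rule real_of_int_floor_add_one_gt)
  then have "x/(2*pi) * (2*pi) < (real_of_int \<lfloor>x/(2*pi)\<rfloor> + 1) * (2*pi)" using p by (intro mult_strict_right_mono) auto
  then show "x - real_of_int \<lfloor>x/(2*pi)\<rfloor> * (2*pi) < 2*pi" by (simp add: algebra_simps)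
qed

lemma periodic_shift_integral:
  fixes g :: "real \<Rightarrow> real"
  assumes gc: "continuous_on UNIV g" and gp: "\<And>x. g (x + 2*pi) = g x"
  shows "integral {-pi..pi} (\<lambda>t. g (x + t)) = integral {-pi..pi} g"
proof -
  define k where "k = \<lfloor>x/(2*pi)\<rfloor>"
  define x0 where "x0 = x - real_of_int k * (2*pi)"
  have x0: "0 \<le> x0" "x0 < 2*pi" unfolding x0_def k_def using frac_range by auto
  have gi: "g integrable_on {a..b}" for a b
    by (rule integrable_continuous_real) (rule continuous_on_subset[OF gc], simp)
  have "(\<lambda>t. g (x + t)) = (\<lambda>t. g (x0 + t))"
  proof
    fix t
    have "x + t = (x0 + t) + real_of_int k * (2*pi)" unfolding x0_def by simp
    then show "g (x + t) = g (x0 + t)" using periodic_int[where g=g, OF gp] by metis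
  qed
  then have "integral {-pi..pi} (\<lambda>t. g (x + t)) = integral {-pi..pi} (\<lambda>t. g (t + x0))"
    by (simp add: add.commute)
  also have "\<dots> = integral {x0 - pi..x0 + pi} g"
    using integral_shift_real_ivl[of "x0 - pi" x0 "x0 + pi" g] by simp
  also have "\<dots> = integral {x0 - pi..pi} g + integral {pi..x0 + pi} g"
    using x0 Henstock_Kurzweil_Integration.integral_combine[where a="x0 - pi" and c=pi and b="x0 + pi" and f=g] gi by simp
  also have "integral {pi..x0 + pi} g = integral {-pi..x0 - pi} g"
  proof -
    have "integral {pi - 2*pi..x0 + pi - 2*pi} (\<lambda>t. g (t + 2*pi)) = integral {pi..x0 + pi} g"
      by (rule integral_shift_real_ivl)
    moreover have "(\<lambda>t. g (t + 2*pi)) = g" by (rule ext) (rule gp)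
    moreover have "pi - 2*pi = -pi" "x0 + pi - 2*pi = x0 - pi" by simp_all
    ultimately show ?thesis by simp
  qed
  also have "integral {x0 - pi..pi} g + integral {-pi..x0 - pi} g = integral {-pi..pi} g"
    using x0 Henstock_Kurzweil_Integration.integral_combine[where a="-pi" and c="x0 - pi" and b=pi and f=g] gi by simp
  finally show ?thesis .
qed



lemma fcomp_cont:
  assumes cont: "continuous_on UNIV f" and "continuous_on S h"
  shows "continuous_on S (\<lambda>t. f (h t))"
  using continuous_on_compose2[OF cont assms(2)] by simp

lemma fourier_term:
  fixes f :: "real \<Rightarrow> real"
  assumes cont: "continuous_on UNIV f" and per: "\<And>x. f (x + 2*pi) = f x"
  shows "fourier_a f j * cos (real j * x) + fourier_b f j * sin (real j * x)
         = (1/pi) * integral {-pi..pi} (\<lambda>t. f (x+t) * cos (real j * t))"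
proof -
  note fc = fcomp_cont[OF cont]
  have i1: "(\<lambda>s. f s * cos (real j * s) * cos (real j * x)) integrable_on {-pi..pi}"
    by (intro integrable_continuous_real continuous_intros fc)
  have i2: "(\<lambda>s. f s * sin (real j * s) * sin (real j * x)) integrable_on {-pi..pi}"
    by (intro integrable_continuous_real continuous_intros fc)
  have "fourier_a f j * cos (real j * x) + fourier_b f j * sin (real j * x)
      = (1/pi) * (integral {-pi..pi} (\<lambda>s. f s * cos (real j * s) * cos (real j * x))
                 + integral {-pi..pi} (\<lambda>s. f s * sin (real j * s) * sin (real j * x)))"
    unfolding fourier_a_def fourier_b_def integral_mult_left by (simp add: algebra_simps)
  also have "integral {-pi..pi} (\<lambda>s. f s * cos (real j * s) * cos (real j * x))
                 + integral {-pi..pi} (\<lambda>s. f s * sin (real j * s) * sin (real j * x))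
           = integral {-pi..pi} (\<lambda>s. f s * cos (real j * (s - x)))"
    by (subst integral_add[OF i1 i2, symmetric]) (simp add: cos_diff right_diff_distrib algebra_simps)
  also have "integral {-pi..pi} (\<lambda>s. f s * cos (real j * (s - x)))
           = integral {-pi..pi} (\<lambda>t. f (x+t) * cos (real j * t))"
  proof -
    define g where "g s = f s * cos (real j * (s - x))" for s
    have gc: "continuous_on UNIV g" unfolding g_def by (intro continuous_intros fc)
    have gp: "g (s + 2*pi) = g s" for s
    proof -
      have "real j * (s + 2*pi - x) = real j * (s - x) + real j * (2*pi)" by (simp add: algebra_simps)
      then show ?thesis unfolding g_def using per cos_nat_periodic by simp
    qed
    have "integral {-pi..pi} (\<lambda>t. g (x + t)) = integral {-pi..pi} g"
      by (rule periodic_shift_integral[OF gc gp])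
    then show ?thesis unfolding g_def by simp
  qed
  finally show ?thesis .
qed

lemma fourier_a0:
  fixes f :: "real \<Rightarrow> real"
  assumes cont: "continuous_on UNIV f" and per: "\<And>x. f (x + 2*pi) = f x"
  shows "fourier_a f 0 / 2 = (1/pi) * integral {-pi..pi} (\<lambda>t. f (x+t) * (1/2))"
proof -
  have "integral {-pi..pi} (\<lambda>t. f (x + t)) = integral {-pi..pi} f"
    by (rule periodic_shift_integral[OF cont per])
  then show ?thesis unfolding fourier_a_def integral_mult_left by simp
qed

lemma partial_sum_int:
  fixes f :: "real \<Rightarrow> real"
  assumes cont: "continuous_on UNIV f" and per: "\<And>x. f (x + 2*pi) = f x"
  shows "fourier_partial_sum k f x = (1/pi) * integral {-pi..pi} (\<lambda>t. f (x+t) * dker k t)"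
proof -
  note fc = fcomp_cont[OF cont]
  have ia: "(\<lambda>t. f (x+t) * (1/2)) integrable_on {-pi..pi}"
    by (intro integrable_continuous_real continuous_intros fc)
  have ib: "(\<lambda>t. f (x+t) * cos (real j * t)) integrable_on {-pi..pi}" for j
    by (intro integrable_continuous_real continuous_intros fc)
  have isum: "(\<lambda>t. \<Sum>j=1..k. f (x+t) * cos (real j * t)) integrable_on {-pi..pi}"
    by (intro integrable_continuous_real continuous_intros fc)
  have "integral {-pi..pi} (\<lambda>t. f (x+t) * dker k t)
      = integral {-pi..pi} (\<lambda>t. f (x+t) * (1/2) + (\<Sum>j=1..k. f (x+t) * cos (real j * t)))"
    unfolding dker_def by (simp add: algebra_simps sum_distrib_left)
  also have "\<dots> = integral {-pi..pi} (\<lambda>t. f (x+t) * (1/2)) + integral {-pi..pi} (\<lambda>t. \<Sum>j=1..k. f (x+t) * cos (real j * t))"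
    by (rule integral_add[OF ia isum])
  also have "integral {-pi..pi} (\<lambda>t. \<Sum>j=1..k. f (x+t) * cos (real j * t)) = (\<Sum>j=1..k. integral {-pi..pi} (\<lambda>t. f (x+t) * cos (real j * t)))"
    by (rule integral_sum[where f="\<lambda>j t. f (x+t) * cos (real j * t)"]) (simp_all add: ib)
  finally have e: "integral {-pi..pi} (\<lambda>t. f (x+t) * dker k t) = integral {-pi..pi} (\<lambda>t. f (x+t) * (1/2)) + (\<Sum>j=1..k. integral {-pi..pi} (\<lambda>t. f (x+t) * cos (real j * t)))" .
  show ?thesis unfolding fourier_partial_sum_def e fourier_a0[OF cont per, of x]
    fourier_term[OF cont per] by (simp add: algebra_simps sum_distrib_left)
qed

lemma cos_integral_zero:
  assumes "1 \<le> j"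
  shows "integral {-pi..pi} (\<lambda>t. cos (real j * t)) = 0"
proof -
  have jp: "real j \<noteq> 0" using assms by simp
  have "((\<lambda>t. cos (real j * t)) has_integral (sin (real j * pi) / real j - sin (real j * (-pi)) / real j)) {-pi..pi}"
  proof (rule fundamental_theorem_of_calculus)
    show "-pi \<le> pi" by simp
    fix t
    have "((\<lambda>t. sin (real j * t) / real j) has_real_derivative cos (real j * t)) (at t within {-pi..pi})"
      using jp by (auto intro!: derivative_eq_intros)
    then show "((\<lambda>t. sin (real j * t) / real j) has_vector_derivative cos (real j * t)) (at t within {-pi..pi})"
      by (simp add: has_real_derivative_iff_has_vector_derivative)
  qed
  then show ?thesis by (simp add: integral_unique sin_npi)
qed

lemma integral_dker: "integral {-pi..pi} (dker k) = pi"
proof -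
  have ib: "(\<lambda>t. cos (real j * t)) integrable_on {-pi..pi}" for j
    by (intro integrable_continuous_real continuous_intros)
  have "integral {-pi..pi} (dker k) = integral {-pi..pi} (\<lambda>t. 1/2 + (\<Sum>j=1..k. cos (real j * t)))"
    unfolding dker_def by simp
  also have "\<dots> = integral {-pi..pi} (\<lambda>t. 1/2) + (\<Sum>j=1..k. integral {-pi..pi} (\<lambda>t. cos (real j * t)))"
  proof -
    have "integral {-pi..pi} (\<lambda>t. 1/2 + (\<Sum>j=1..k. cos (real j * t))) = integral {-pi..pi} (\<lambda>t. 1/2) + integral {-pi..pi} (\<lambda>t. \<Sum>j=1..k. cos (real j * t))"
      by (rule integral_add) (auto intro!: integrable_continuous_real continuous_intros)
    also have "integral {-pi..pi} (\<lambda>t. \<Sum>j=1..k. cos (real j * t)) = (\<Sum>j=1..k. integral {-pi..pi} (\<lambda>t. cos (real j * t)))"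
      by (rule integral_sum[where f="\<lambda>j t. cos (real j * t)"]) (simp_all add: ib)
    finally show ?thesis .
  qed
  also have "(\<Sum>j=1..k. integral {-pi..pi} (\<lambda>t. cos (real j * t))) = 0"
    by (rule sum.neutral) (simp add: cos_integral_zero)
  finally show ?thesis by simp
qed



lemma partial_minus:
  fixes f :: "real \<Rightarrow> real"
  assumes cont: "continuous_on UNIV f" and per: "\<And>x. f (x + 2*pi) = f x"
  shows "fourier_partial_sum k f x - f x = (1/pi) * integral {-pi..pi} (\<lambda>t. (f (x+t) - f x) * dker k t)"
proof -
  note fc = fcomp_cont[OF cont]
  have i1: "(\<lambda>t. f (x+t) * dker k t) integrable_on {-pi..pi}"
    unfolding dker_def by (intro integrable_continuous_real continuous_intros fc)
  have i2: "(\<lambda>t. f x * dker k t) integrable_on {-pi..pi}"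
    unfolding dker_def by (intro integrable_continuous_real continuous_intros fc)
  have "integral {-pi..pi} (\<lambda>t. (f (x+t) - f x) * dker k t)
      = integral {-pi..pi} (\<lambda>t. f (x+t) * dker k t - f x * dker k t)"
    by (simp add: algebra_simps)
  also have "\<dots> = integral {-pi..pi} (\<lambda>t. f (x+t) * dker k t) - f x * pi"
    by (simp add: integral_diff[OF i1 i2] integral_mult_right integral_dker)
  finally have e: "integral {-pi..pi} (\<lambda>t. (f (x+t) - f x) * dker k t) = integral {-pi..pi} (\<lambda>t. f (x+t) * dker k t) - f x * pi" .
  show ?thesis unfolding partial_sum_int[OF cont per] e using pi_gt_zero by (simp add: field_simps)
qed

lemma norlund_rep:
  fixes f :: "real \<Rightarrow> real"
  assumes cont: "continuous_on UNIV f" and per: "\<And>x. f (x + 2*pi) = f x"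
    and Ps: "(\<Sum>k\<le>n. p k) \<noteq> 0"
    and Adef: "\<And>k. k \<le> n \<Longrightarrow> A k = p (n-k) / (\<Sum>k\<le>n. p k)"
  shows "norlund_mean p n f x - f x
         = (1/pi) * integral {-pi..pi} (\<lambda>t. (f (x+t) - f x) * (\<Sum>k\<le>n. A k * dker k t))"
proof -
  note fc = fcomp_cont[OF cont]
  define P where "P = (\<Sum>k\<le>n. p k)"
  have rev: "(\<Sum>k\<le>n. p (n-k)) = P"
    unfolding P_def atMost_atLeast0 using sum.atLeastAtMost_rev[of p 0 n] by simp
  have sA: "(\<Sum>k\<le>n. A k) = 1"
    using Adef Ps rev unfolding P_def by (simp add: sum_divide_distrib[symmetric])
  have "norlund_mean p n f x = (\<Sum>k\<le>n. A k * fourier_partial_sum k f x)"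
    unfolding norlund_mean_def sum_distrib_left using Adef by (intro sum.cong) auto
  then have "norlund_mean p n f x - f x = (\<Sum>k\<le>n. A k * (fourier_partial_sum k f x - f x))"
    using sA by (simp add: sum_distrib_right[symmetric] right_diff_distrib sum_subtractf)
  also have "\<dots> = (\<Sum>k\<le>n. (1/pi) * integral {-pi..pi} (\<lambda>t. A k * ((f (x+t) - f x) * dker k t)))"
    unfolding partial_minus[OF cont per] integral_mult_right by simp
  also have "\<dots> = (1/pi) * (\<Sum>k\<le>n. integral {-pi..pi} (\<lambda>t. A k * ((f (x+t) - f x) * dker k t)))"
    by (simp add: sum_distrib_left)
  also have "(\<Sum>k\<le>n. integral {-pi..pi} (\<lambda>t. A k * ((f (x+t) - f x) * dker k t)))
      = integral {-pi..pi} (\<lambda>t. \<Sum>k\<le>n. A k * ((f (x+t) - f x) * dker k t))"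
    by (rule integral_sum[where f="\<lambda>k t. A k * ((f (x+t) - f x) * dker k t)", symmetric])
       (auto simp: dker_def intro!: integrable_continuous_real continuous_intros fc)
  also have "(\<lambda>t. \<Sum>k\<le>n. A k * ((f (x+t) - f x) * dker k t)) = (\<lambda>t. (f (x+t) - f x) * (\<Sum>k\<le>n. A k * dker k t))"
    by (simp add: sum_distrib_left mult_ac)
  finally show ?thesis .
qed

lemma f_bounded:
  fixes f :: "real \<Rightarrow> real"
  assumes cont: "continuous_on UNIV f" and per: "\<And>x. f (x + 2*pi) = f x"
  shows "\<exists>B. \<forall>y. \<bar>f y\<bar> \<le> B"
proof -
  have "compact (f ` {0..2*pi})"
    by (rule compact_continuous_image) (auto intro: continuous_on_subset[OF cont])
  then obtain B where B: "\<And>z. z \<in> f ` {0..2*pi} \<Longrightarrow> \<bar>z\<bar> \<le> B"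
    using compact_imp_bounded bounded_real by metis
  have "\<bar>f y\<bar> \<le> B" for y
  proof -
    define y0 where "y0 = y - real_of_int \<lfloor>y/(2*pi)\<rfloor> * (2*pi)"
    have y0: "y0 \<in> {0..2*pi}" unfolding y0_def using frac_range[of y] by auto
    have "f y = f (y0 + real_of_int \<lfloor>y/(2*pi)\<rfloor> * (2*pi))" unfolding y0_def by simp
    also have "\<dots> = f y0" by (rule periodic_int[where g=f, OF per])
    finally show ?thesis using B y0 by auto
  qed
  then show ?thesis by blast
qed

lemma moc_props:
  fixes f :: "real \<Rightarrow> real"
  assumes B: "\<And>y. \<bar>f y\<bar> \<le> B"
  shows moc_ge: "\<And>h x \<delta>. \<bar>h\<bar> \<le> \<delta> \<Longrightarrow> \<bar>f (x + h) - f x\<bar> \<le> modulus_of_continuity f \<delta>"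
    and moc_mono: "\<And>s t. 0 \<le> s \<Longrightarrow> s \<le> t \<Longrightarrow> modulus_of_continuity f s \<le> modulus_of_continuity f t"
    and moc_nonneg: "\<And>\<delta>. 0 \<le> \<delta> \<Longrightarrow> 0 \<le> modulus_of_continuity f \<delta>"
    and moc_le: "\<And>\<delta>. 0 \<le> \<delta> \<Longrightarrow> modulus_of_continuity f \<delta> \<le> 2 * B"
proof -
  have fd: "\<bar>f (x + h) - f x\<bar> \<le> 2 * B" for x h using B[of "x+h"] B[of x] by linarith
  have inner_bdd: "bdd_above (range (\<lambda>x. \<bar>f (x + h) - f x\<bar>))" for h
    using fd by (intro bdd_aboveI2) auto
  have inner_le: "(SUP x. \<bar>f (x + h) - f x\<bar>) \<le> 2 * B" for h
    using fd by (intro cSUP_least) auto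
  have outer_bdd: "bdd_above ((\<lambda>h. SUP x. \<bar>f (x + h) - f x\<bar>) ` S)" for S
    using inner_le by (intro bdd_aboveI2) auto
  show ge: "\<bar>f (x + h) - f x\<bar> \<le> modulus_of_continuity f \<delta>" if "\<bar>h\<bar> \<le> \<delta>" for h x \<delta>
  proof -
    have "\<bar>f (x + h) - f x\<bar> \<le> (SUP x. \<bar>f (x + h) - f x\<bar>)"
      by (rule cSUP_upper[OF _ inner_bdd]) simp
    also have "\<dots> \<le> modulus_of_continuity f \<delta>"
      unfolding modulus_of_continuity_def using that by (intro cSUP_upper[OF _ outer_bdd]) auto
    finally show ?thesis .
  qed
  show "modulus_of_continuity f s \<le> modulus_of_continuity f t" if "0 \<le> s" "s \<le> t" for s t
    unfolding modulus_of_continuity_def using that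
    by (intro cSUP_subset_mono outer_bdd) (auto simp: inner_bdd)
  show "0 \<le> modulus_of_continuity f \<delta>" if "0 \<le> \<delta>" for \<delta>
    using ge[of 0 \<delta> 0] that by simp
  show "modulus_of_continuity f \<delta> \<le> 2 * B" if "0 \<le> \<delta>" for \<delta>
    unfolding modulus_of_continuity_def by (rule cSUP_least) (use that inner_le in auto)
qed



lemma om_sq_integrable:
  fixes om :: "real \<Rightarrow> real"
  assumes mono: "\<And>s t. 0 \<le> s \<Longrightarrow> s \<le> t \<Longrightarrow> om s \<le> om t"
    and bnd: "\<And>t. 0 \<le> t \<Longrightarrow> \<bar>om t\<bar> \<le> M" and u: "0 < u"
  shows "(\<lambda>t. om t / t\<^sup>2) integrable_on {u..b}"
proof -
  have oi: "om integrable_on {u..b}"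
    by (rule integrable_on_mono_on) (intro mono_onI mono, use u in auto)
  have m1: "om \<in> borel_measurable (lebesgue_on {u..b})" by (rule integrable_imp_measurable[OF oi])
  have m2: "(\<lambda>t. 1 / t\<^sup>2) \<in> borel_measurable (lebesgue_on {u..b})"
    by (rule continuous_imp_measurable_on_sets_lebesgue) (use u in \<open>auto intro!: continuous_intros\<close>)
  have m: "(\<lambda>t. om t * (1 / t\<^sup>2)) \<in> borel_measurable (lebesgue_on {u..b})"
    using m1 m2 by (rule borel_measurable_times)
  have "(\<lambda>t. om t * (1 / t\<^sup>2)) integrable_on {u..b}"
  proof (rule measurable_bounded_by_integrable_imp_integrable_real[OF m])
    show "(\<lambda>t. M / u\<^sup>2) integrable_on {u..b}" by (rule integrable_continuous_real) (rule continuous_on_const)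
    show "{u..b} \<in> sets lebesgue" by simp
    fix t assume t: "t \<in> {u..b}"
    then have tp: "0 < t" "u \<le> t" using u by auto
    have "\<bar>om t * (1 / t\<^sup>2)\<bar> = \<bar>om t\<bar> / t\<^sup>2" using tp by (simp add: abs_mult)
    also have "\<dots> \<le> M / t\<^sup>2" using bnd[of t] tp by (intro divide_right_mono) auto
    also have "\<dots> \<le> M / u\<^sup>2"
    proof (rule divide_left_mono)
      show "0 \<le> M" using bnd[of t] tp by linarith
      show "u\<^sup>2 \<le> t\<^sup>2" using tp u by (intro power_mono) auto
      show "0 < t\<^sup>2 * u\<^sup>2" using tp u by simp
    qed
    finally show "\<bar>om t * (1 / t\<^sup>2)\<bar> \<le> M / u\<^sup>2" .
  qed
  then show ?thesis by simp
qed

lemma inv_sq_integral: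
  fixes t b :: real
  assumes "0 < t" "t \<le> b"
  shows "((\<lambda>s. 1 / s\<^sup>2) has_integral (1/t - 1/b)) {t..b}"
proof -
  have "((\<lambda>s. 1 / s\<^sup>2) has_integral ((\<lambda>s. - 1 / s) b - (\<lambda>s. - 1 / s) t)) {t..b}"
  proof (rule fundamental_theorem_of_calculus[where f="\<lambda>s. - 1 / s" and a=t and b=b])
    show "t \<le> b" by fact
    fix x assume x: "x \<in> {t..b}"
    then have x0: "x \<noteq> 0" using assms by auto
    have "((\<lambda>s. - 1 / s) has_real_derivative 1 / x\<^sup>2) (at x within {t..b})"
      using x0 by (auto intro!: derivative_eq_intros simp: power2_eq_square field_simps)
    then show "((\<lambda>s. - 1 / s) has_vector_derivative 1 / x\<^sup>2) (at x within {t..b})"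
      by (simp add: has_real_derivative_iff_has_vector_derivative)
  qed
  then show ?thesis by simp
qed

lemma om_over_t:
  fixes om H :: "real \<Rightarrow> real"
  assumes mono: "\<And>s t. 0 \<le> s \<Longrightarrow> s \<le> t \<Longrightarrow> om s \<le> om t"
    and bnd: "\<And>t. 0 \<le> t \<Longrightarrow> \<bar>om t\<bar> \<le> M"
    and nn: "\<And>t. 0 \<le> t \<Longrightarrow> 0 \<le> om t"
    and HI: "\<And>u. 0 < u \<Longrightarrow> u \<le> pi \<Longrightarrow> integral {u..pi} (\<lambda>t. om t / t\<^sup>2) \<le> C4 * H u"
    and t: "0 < t" "t \<le> 1"
  shows "om t / t \<le> 2 * C4 * H t"
proof -
  have tpi: "t \<le> pi" using t pi_gt3 by linarith
  have ci: "(\<lambda>s. om t * (1 / s\<^sup>2)) integrable_on {t..pi}"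
    using inv_sq_integral[OF t(1) tpi] by (intro integrable_on_mult_right) (auto simp: integrable_on_def)
  have "integral {t..pi} (\<lambda>s. om t * (1 / s\<^sup>2)) = om t * (1/t - 1/pi)"
    unfolding integral_mult_right using inv_sq_integral[OF t(1) tpi] by (simp add: integral_unique)
  moreover have "integral {t..pi} (\<lambda>s. om t * (1 / s\<^sup>2)) \<le> integral {t..pi} (\<lambda>s. om s / s\<^sup>2)"
  proof (rule integral_le[OF ci])
    show "(\<lambda>s. om s / s\<^sup>2) integrable_on {t..pi}" by (rule om_sq_integrable[OF mono bnd t(1)])
    fix s assume "s \<in> {t..pi}"
    then have "t \<le> s" "0 < s" using t by auto
    then show "om t * (1 / s\<^sup>2) \<le> om s / s\<^sup>2" using mono[of t s] t by (simp add: divide_right_mono)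
  qed
  moreover have "integral {t..pi} (\<lambda>s. om s / s\<^sup>2) \<le> C4 * H t" using HI t tpi by simp
  ultimately have a: "om t * (1/t - 1/pi) \<le> C4 * H t" by linarith
  have "1/(2*t) \<le> 1/t - 1/pi"
  proof -
    have "1/pi \<le> 1/(2*t)" using t pi_gt3 by (intro divide_left_mono) auto
    moreover have "1/t = 2 * (1/(2*t))" using t by simp
    ultimately show ?thesis by linarith
  qed
  then have "om t * (1/(2*t)) \<le> om t * (1/t - 1/pi)" using nn[of t] t by (intro mult_left_mono) auto
  with a have "om t * (1/(2*t)) \<le> C4 * H t" by linarith
  then show ?thesis using t by (simp add: field_simps)
qed

lemma half_est:
  fixes h om H :: "real \<Rightarrow> real"
  assumes l: "0 < l" "l \<le> pi"
    and hc: "continuous_on {0..pi} h" and h0: "h 0 = 0"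
    and hb1: "\<And>t. 0 < t \<Longrightarrow> t \<le> l \<Longrightarrow> \<bar>h t\<bar> \<le> D1 * H t"
    and hb2: "\<And>t. l \<le> t \<Longrightarrow> t \<le> pi \<Longrightarrow> \<bar>h t\<bar> \<le> D2 * l * (om t / t\<^sup>2)"
    and omi: "(\<lambda>t. om t / t\<^sup>2) integrable_on {l..pi}"
    and Hi: "H integrable_on {0..l}" and HI: "integral {0..l} H \<le> C5 * (l * H l)"
    and OI: "integral {l..pi} (\<lambda>t. om t / t\<^sup>2) \<le> C4 * H l"
    and D1: "0 \<le> D1" and D2: "0 \<le> D2"
  shows "\<bar>integral {0..pi} h\<bar> \<le> (D1 * C5 + D2 * C4) * (l * H l)"
proof -
  have hi: "h integrable_on {a..b}" if "0 \<le> a" "b \<le> pi" for a b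
    by (rule integrable_continuous_real) (rule continuous_on_subset[OF hc], use that in auto)
  have split: "integral {0..pi} h = integral {0..l} h + integral {l..pi} h"
    using l Henstock_Kurzweil_Integration.integral_combine[where a=0 and c=l and b=pi and f=h] hi[of 0 pi] by simp
  define H' where "H' t = (if t = 0 then 0 else D1 * H t)" for t
  have Hi': "(\<lambda>t. D1 * H t) integrable_on {0..l}" using Hi by (rule integrable_on_mult_right)
  have H'i: "H' integrable_on {0..l}"
    by (rule integrable_spike[OF Hi', of "{0}"]) (auto simp: H'_def)
  have H'e: "integral {0..l} H' = D1 * integral {0..l} H"
  proof -
    have "integral {0..l} (\<lambda>t. D1 * H t) = integral {0..l} H'"
      by (rule integral_spike[of "{0}"]) (auto simp: H'_def)
    then show ?thesis by (simp add: integral_mult_right)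
  qed
  have p1: "\<bar>integral {0..l} h\<bar> \<le> D1 * C5 * (l * H l)"
  proof -
    have "norm (integral {0..l} h) \<le> integral {0..l} H'"
    proof (rule integral_norm_bound_integral[OF hi H'i])
      fix t assume "t \<in> {0..l}"
      then show "norm (h t) \<le> H' t" using hb1[of t] h0 by (cases "t = 0") (auto simp: H'_def)
    qed (use l in auto)
    also have "\<dots> \<le> D1 * C5 * (l * H l)" unfolding H'e using HI D1
      by (metis mult.assoc mult_left_mono)
    finally show ?thesis by simp
  qed
  have p2: "\<bar>integral {l..pi} h\<bar> \<le> D2 * C4 * (l * H l)"
  proof -
    have ci: "(\<lambda>t. D2 * l * (om t / t\<^sup>2)) integrable_on {l..pi}" using omi by (rule integrable_on_mult_right)
    have "norm (integral {l..pi} h) \<le> integral {l..pi} (\<lambda>t. D2 * l * (om t / t\<^sup>2))"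
      by (rule integral_norm_bound_integral[OF hi ci]) (use l hb2 in auto)
    also have "\<dots> = D2 * l * integral {l..pi} (\<lambda>t. om t / t\<^sup>2)" by (rule integral_mult_right)
    also have "\<dots> \<le> D2 * l * (C4 * H l)" using OI D2 l by (intro mult_left_mono) auto
    finally show ?thesis by (simp add: mult_ac)
  qed
  show ?thesis unfolding split using p1 p2 by (simp add: algebra_simps abs_triangle_ineq[THEN order_trans])
qed



theorem corollary4p1:
  fixes f :: "real \<Rightarrow> real" and p :: "nat \<Rightarrow> real" and \<beta> :: real
    and H :: "real \<Rightarrow> real"
    and P :: "nat \<Rightarrow> real" and a :: "nat \<Rightarrow> nat \<Rightarrow> real"
  assumes cont: "continuous_on UNIV f"
    and periodic: "\<And>x. f (x + 2 * pi) = f x"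
    and p_nonneg: "\<And>k. p k \<ge> 0"
    and P_def: "\<And>n. P n = (\<Sum>k\<le>n. p k)"
    and P_nz: "\<And>n. P n \<noteq> 0"
    and a_def: "\<And>n k. a n k = (if k \<le> n then p (n - k) / P n else 0)"
    and beta: "\<beta> \<ge> 0"
    and cond: "\<exists>C>0. \<forall>n m. m \<le> n \<longrightarrow>
        (\<Sum>k. (real (k + m) + 1) powr \<beta> *
            \<bar>a n (k + m) / (real (k + m) + 1) powr \<beta>
             - a n (k + m + 1) / (real (k + m) + 2) powr \<beta>\<bar>) \<le> C * a n m"
    and H_nonneg: "\<And>u. u > 0 \<Longrightarrow> H u \<ge> 0"
    and H1: "\<exists>C>0. \<forall>u\<in>{0<..pi}.
        integral {u..pi} (\<lambda>t. modulus_of_continuity f t / t\<^sup>2) \<le> C * H u"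
    and H2: "\<exists>C>0. \<forall>t\<in>{0<..pi}.
        H integrable_on {0..t} \<and> integral {0..t} H \<le> C * (t * H t)"
  shows "\<exists>C>0. \<forall>n. sup_norm (\<lambda>x. norlund_mean p n f x - f x)
            \<le> C * ((p n / P n) * H (p n / P n))"
proof -
  obtain Cc where Cc: "Cc > 0" and condC0: "\<forall>n m. m \<le> n \<longrightarrow>
        (\<Sum>k. (real (k + m) + 1) powr \<beta> *
            \<bar>a n (k + m) / (real (k + m) + 1) powr \<beta>
             - a n (k + m + 1) / (real (k + m) + 2) powr \<beta>\<bar>) \<le> Cc * a n m"
    using cond by (elim exE conjE)
  have condC: "(\<Sum>k. (real (k + m) + 1) powr \<beta> *
            \<bar>a n (k + m) / (real (k + m) + 1) powr \<beta>
             - a n (k + m + 1) / (real (k + m) + 2) powr \<beta>\<bar>) \<le> Cc * a n m" if "m \<le> n" for n m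
    using condC0 that by blast
  define om where "om = modulus_of_continuity f"
  obtain C4 where C4: "C4 > 0" and C4b0: "\<forall>u\<in>{0<..pi}.
        integral {u..pi} (\<lambda>t. modulus_of_continuity f t / t\<^sup>2) \<le> C4 * H u"
    using H1 by (elim exE conjE)
  have C4b: "integral {u..pi} (\<lambda>t. om t / t\<^sup>2) \<le> C4 * H u" if "0 < u" "u \<le> pi" for u
    using C4b0 that unfolding om_def by simp
  obtain C5 where C5: "C5 > 0" and C5b0: "\<forall>t\<in>{0<..pi}.
        H integrable_on {0..t} \<and> integral {0..t} H \<le> C5 * (t * H t)"
    using H2 by (elim exE conjE)
  have C5b: "H integrable_on {0..t} \<and> integral {0..t} H \<le> C5 * (t * H t)" if "0 < t" "t \<le> pi" for t
    using C5b0 that by simp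
  obtain B where B: "\<And>y. \<bar>f y\<bar> \<le> B" using f_bounded[OF cont periodic] by blast
  have om_ge: "\<And>h x \<delta>. \<bar>h\<bar> \<le> \<delta> \<Longrightarrow> \<bar>f (x + h) - f x\<bar> \<le> om \<delta>"
    unfolding om_def by (rule moc_ge[OF B])
  have om_mono: "\<And>s t. 0 \<le> s \<Longrightarrow> s \<le> t \<Longrightarrow> om s \<le> om t"
    unfolding om_def by (rule moc_mono[OF B])
  have om_nn: "\<And>t. 0 \<le> t \<Longrightarrow> 0 \<le> om t"
    unfolding om_def by (rule moc_nonneg[OF B])
  have om_bnd: "\<bar>om t\<bar> \<le> 2 * B" if "0 \<le> t" for t
  proof -
    have "om t \<le> 2 * B" unfolding om_def by (rule moc_le[OF B that])
    then show ?thesis using om_nn[OF that] by simp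
  qed
  define C1 where "C1 = 5 + 36 * 2 powr \<beta> * Cc * (1 + Cc)"
  have C1: "0 < C1" unfolding C1_def using Cc by (simp add: add_pos_nonneg)
  define C where "C = C1 * (2 * C4 * C5 + C4)"
  have Cpos: "0 < C" unfolding C_def using C1 C4 C5 by (simp add: add_pos_pos)
  have main: "sup_norm (\<lambda>x. norlund_mean p n f x - f x) \<le> C * ((p n / P n) * H (p n / P n))" for n
  proof -
    define A where "A = a n"
    have "0 \<le> P n" unfolding P_def by (rule sum_nonneg) (use p_nonneg in auto)
    then have Ppos: "0 < P n" using P_nz[of n] by linarith
    have A0: "\<And>k. 0 \<le> A k" unfolding A_def a_def using Ppos p_nonneg by simp
    have Az: "\<And>k. n < k \<Longrightarrow> A k = 0" unfolding A_def a_def by simp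
    have Adef: "\<And>k. k \<le> n \<Longrightarrow> A k = p (n-k) / (\<Sum>k\<le>n. p k)" unfolding A_def a_def P_def by simp
    have rev: "(\<Sum>k\<le>n. p (n-k)) = P n"
      unfolding P_def atMost_atLeast0 using sum.atLeastAtMost_rev[of p 0 n] by simp
    have As: "(\<Sum>k\<le>n. A k) = 1"
      using Adef P_nz rev unfolding P_def by (simp add: sum_divide_distrib[symmetric])
    have condA: "(\<Sum>l=m..n. Tm \<beta> A l) \<le> Cc * A m" if mn: "m \<le> n" for m
    proof -
      have teq: "(real (k + m) + 1) powr \<beta> *
            \<bar>a n (k + m) / (real (k + m) + 1) powr \<beta>
             - a n (k + m + 1) / (real (k + m) + 2) powr \<beta>\<bar> = Tm \<beta> A (k+m)" for k
      proof -
        have e1: "real (k + m) + 2 = real (Suc (k + m)) + 1" by simp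
        have e2: "k + m + 1 = Suc (k + m)" by simp
        show ?thesis unfolding Tm_def wt_def A_def e1 e2 by (rule refl)
      qed
      have "(\<Sum>k. Tm \<beta> A (k+m)) = (\<Sum>k\<in>{..<Suc n - m}. Tm \<beta> A (k+m))"
      proof (rule suminf_finite)
        fix k assume "k \<notin> {..<Suc n - m}"
        then have "n < k + m" by auto
        then show "Tm \<beta> A (k+m) = 0" unfolding Tm_def using Az by simp
      qed simp
      also have "\<dots> = (\<Sum>l=m..n. Tm \<beta> A l)"
        using mn by (subst sum_shift_conv) (auto simp: add.commute)
      finally show ?thesis using condC[OF mn] unfolding teq A_def by simp
    qed
    note kf = kernel_facts[OF A0 Az As beta Cc condA]
    define l where "l = p n / P n"
    have lA: "l = A 0" unfolding l_def A_def a_def by simp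
    have lpos: "0 < l"
    proof (rule ccontr)
      assume "\<not> 0 < l"
      then have "A 0 = 0" using lA A0[of 0] by simp
      have "A j = 0" if "j \<le> n" for j using kf(1)[of 0 j] A0[of j] that \<open>A 0 = 0\<close> by simp
      then have "(\<Sum>k\<le>n. A k) = 0" by (intro sum.neutral) auto
      then show False using As by simp
    qed
    have l1: "l \<le> 1"
    proof -
      have "A 0 \<le> (\<Sum>k\<le>n. A k)" using A0 by (intro member_le_sum) auto
      then show ?thesis using lA As by simp
    qed
    have lpi: "l \<le> pi" using l1 pi_gt3 by linarith
    define K where "K t = (\<Sum>k\<le>n. A k * dker k t)" for t
    have Kb1: "\<bar>K t\<bar> \<le> C1 * l / t^2" if "0 < t" "t \<le> pi" for t
      unfolding K_def C1_def lA using kernel_bounds(1)[OF A0 Az As beta Cc condA that] .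
    have Kb2: "\<bar>K t\<bar> \<le> C1 / t" if "0 < t" "t \<le> pi" for t
      unfolding K_def C1_def using kernel_bounds(2)[OF A0 Az As beta Cc condA that] .
    have Keven: "K (-t) = K t" for t unfolding K_def by (simp add: dker_even)
    have Kc: "continuous_on S K" for S unfolding K_def dker_def by (intro continuous_intros)
    have Hl: "0 \<le> H l" using H_nonneg lpos by simp
    have est: "\<bar>integral {0..pi} h\<bar> \<le> C * (l * H l)"
      if hc: "continuous_on {0..pi} h" and h0: "h 0 = 0"
        and hb: "\<And>t. 0 < t \<Longrightarrow> t \<le> pi \<Longrightarrow> \<bar>h t\<bar> \<le> om t * \<bar>K t\<bar>" for h
    proof -
      have "\<bar>integral {0..pi} h\<bar> \<le> ((C1 * (2 * C4)) * C5 + C1 * C4) * (l * H l)"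
      proof (rule half_est[OF lpos lpi hc h0])
        fix t assume t: "0 < t" "t \<le> l"
        have "\<bar>h t\<bar> \<le> om t * \<bar>K t\<bar>" using hb t lpi by simp
        also have "\<dots> \<le> om t * (C1 / t)" using Kb2[of t] t lpi om_nn[of t] by (intro mult_left_mono) auto
        also have "\<dots> = C1 * (om t / t)" by simp
        also have "\<dots> \<le> C1 * (2 * C4 * H t)"
          using om_over_t[OF om_mono om_bnd om_nn C4b, of t] t l1 C1 by (intro mult_left_mono) auto
        finally show "\<bar>h t\<bar> \<le> C1 * (2 * C4) * H t" by (simp add: mult_ac)
      next
        fix t assume t: "l \<le> t" "t \<le> pi"
        then have tp: "0 < t" using lpos by simp
        have "\<bar>h t\<bar> \<le> om t * \<bar>K t\<bar>" using hb t tp by simp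
        also have "\<dots> \<le> om t * (C1 * l / t^2)" using Kb1[of t] t tp om_nn[of t] by (intro mult_left_mono) auto
        also have "\<dots> = C1 * l * (om t / t^2)" by simp
        finally show "\<bar>h t\<bar> \<le> C1 * l * (om t / t\<^sup>2)" .
      next
        show "(\<lambda>t. om t / t\<^sup>2) integrable_on {l..pi}" by (rule om_sq_integrable[OF om_mono om_bnd lpos])
        show "H integrable_on {0..l}" using C5b lpos lpi by simp
        show "integral {0..l} H \<le> C5 * (l * H l)" using C5b lpos lpi by simp
        show "integral {l..pi} (\<lambda>t. om t / t\<^sup>2) \<le> C4 * H l" using C4b lpos lpi by simp
        show "0 \<le> C1 * (2 * C4)" using C1 C4 by simp
        show "0 \<le> C1" using C1 by simp
      qed
      also have "((C1 * (2 * C4)) * C5 + C1 * C4) = C" unfolding C_def by (simp add: algebra_simps)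
      finally show ?thesis .
    qed
    have pt: "\<bar>norlund_mean p n f x - f x\<bar> \<le> C * (l * H l)" for x
    proof -
      define g where "g t = (f (x+t) - f x) * K t" for t
      have gc: "continuous_on S g" for S unfolding g_def
        by (intro continuous_intros Kc fcomp_cont[OF cont])
      have gi: "g integrable_on {a..b}" for a b by (rule integrable_continuous_real[OF gc])
      have rep: "norlund_mean p n f x - f x = (1/pi) * integral {-pi..pi} g"
        unfolding g_def K_def by (rule norlund_rep[OF cont periodic _ Adef]) (use P_nz P_def in auto)
      have split: "integral {-pi..pi} g = integral {-pi..0} g + integral {0..pi} g"
        using Henstock_Kurzweil_Integration.integral_combine[where a="-pi" and c=0 and b=pi and f=g] gi by simp
      have refl: "integral {-pi..0} g = integral {0..pi} (\<lambda>t. g (-t))"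
        using Henstock_Kurzweil_Integration.integral_reflect_real[of pi 0 "\<lambda>t. g (-t)"] by simp
      have e1: "\<bar>integral {0..pi} g\<bar> \<le> C * (l * H l)"
      proof (rule est)
        show "continuous_on {0..pi} g" by (rule gc)
        show "g 0 = 0" unfolding g_def by simp
        fix t assume "0 < t" "t \<le> pi"
        have "\<bar>f (x + t) - f x\<bar> \<le> om t" using om_ge[of t t x] \<open>0 < t\<close> by simp
        then show "\<bar>g t\<bar> \<le> om t * \<bar>K t\<bar>" unfolding g_def abs_mult by (intro mult_right_mono) auto
      qed
      have e2: "\<bar>integral {0..pi} (\<lambda>t. g (-t))\<bar> \<le> C * (l * H l)"
      proof (rule est)
        show "continuous_on {0..pi} (\<lambda>t. g (-t))" by (intro continuous_on_compose2[OF gc[of UNIV]] continuous_intros) auto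
        show "g (-0) = 0" unfolding g_def by simp
        fix t assume "0 < t" "t \<le> pi"
        have "\<bar>f (x + (-t)) - f x\<bar> \<le> om t" using om_ge[of "-t" t x] \<open>0 < t\<close> by simp
        then show "\<bar>g (-t)\<bar> \<le> om t * \<bar>K t\<bar>" unfolding g_def abs_mult Keven by (intro mult_right_mono) auto
      qed
      have "\<bar>integral {-pi..pi} g\<bar> \<le> 2 * (C * (l * H l))" using split refl e1 e2 by linarith
      then have "\<bar>norlund_mean p n f x - f x\<bar> \<le> (1/pi) * (2 * (C * (l * H l)))"
        unfolding rep by (simp add: abs_mult divide_right_mono)
      also have "\<dots> \<le> C * (l * H l)"
      proof -
        define X where "X = C * (l * H l)"
        have X0: "0 \<le> X" unfolding X_def using Cpos lpos Hl by simp
        have "2 * X \<le> pi * X" using X0 pi_gt3 by (intro mult_right_mono) auto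
        then have "(1/pi) * (2 * X) \<le> X" using pi_gt_zero by (simp add: field_simps)
        then show ?thesis unfolding X_def .
      qed
      finally show ?thesis .
    qed
    show ?thesis unfolding sup_norm_def l_def[symmetric] by (rule cSUP_least) (use pt in auto)
  qed
  show ?thesis using Cpos main by blast
qed

end
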